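(* For every $n\ge 6$ there exist two non-isomorphic graphs $G_n,H_n$ on $n$ vertices and a graph $F$ such that, with $\mathcal{F}=\{F\}$, for every number of rounds $T\ge 0$, $$\big\|\overline{\phi^{(T)}_{\mathsf{WL}}}(G_n)-\overline{\phi^{(T)}_{\mathsf{WL}}}(H_n)\big\|=0\quad\text{and}\quad\big\|\overline{\phi^{(T)}_{\mathsf{WL},\mathcal{F}}}(G_n)-\overline{\phi^{(T)}_{\mathsf{WL},\mathcal{F}}}(H_n)\big\|=\sqrt{2}.$$
   Context: Graphs are finite, simple, undirected, unlabeled. $1$-WL: $C^1_0$ constant, $C^1_t(v)=\mathsf{RELABEL}(C^1_{t-1}(v),\{\!\{C^1_{t-1}(u):u\in N(v)\}\!\})$, $\mathsf{RELABEL}$ a fixed injective map shared by all graphs. $1$-WL$_{\mathcal{F}}$: same update with initial colour $C^{1,\mathcal{F}}_0(v)=(\ell_F(v))_{F\in\mathcal{F}}$, $\ell_F(v)=1$ if $v$ belongs to some vertex set $X$ with induced subgraph $G[X]$ isomorphic to $F$, else $0$. For round $t$, $\phi_t(G)$ (resp. $\phi_{\mathcal{F},t}(G)$) is the vector indexed by the colours occurring at round $t$ (in the graphs considered) counting vertices of $G$ of each colour; $\phi^{(T)}_{\mathsf{WL}}(G)=[\phi_0(G),\dots,\phi_T(G)]$, $\phi^{(T)}_{\mathsf{WL},\mathcal{F}}(G)=[\phi_{\mathcal{F},0}(G),\dots,\phi_{\mathcal{F},T}(G)]$; a bar denotes normalisation to unit Euclidean norm; $\|\cdot\|$ is the Euclidean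 norm. *)

theory Defs
  imports Complex_Main "HOL-Library.Multiset"
begin

definition is_graph :: "'v set \<Rightarrow> 'v set set \<Rightarrow> bool" where
  "is_graph V E \<longleftrightarrow> finite V \<and> (\<forall>e\<in>E. e \<subseteq> V \<and> card e = 2)"

definition graph_iso :: "'v set \<Rightarrow> 'v set set \<Rightarrow> 'w set \<Rightarrow> 'w set set \<Rightarrow> bool" where
  "graph_iso V E V' E' \<longleftrightarrow> (\<exists>f. bij_betw f V V' \<and>
     (\<forall>u\<in>V. \<forall>w\<in>V. {u, w} \<in> E \<longleftrightarrow> {f u, f w} \<in> E'))"

definition nbrs :: "'v set \<Rightarrow> 'v set set \<Rightarrow> 'v \<Rightarrow> 'v set" where
  "nbrs V E v = {u \<in> V. {u, v} \<in> E}"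

definition induced_edges :: "'v set set \<Rightarrow> 'v set \<Rightarrow> 'v set set" where
  "induced_edges E X = {e \<in> E. e \<subseteq> X}"

definition ell :: "'v set \<Rightarrow> 'v set set \<Rightarrow> ('w set \<times> 'w set set) \<Rightarrow> 'v \<Rightarrow> nat" where
  "ell V E F v = (if \<exists>X. X \<subseteq> V \<and> v \<in> X \<and> graph_iso X (induced_edges E X) (fst F) (snd F)
                  then 1 else 0)"

text \<open>WL colours; the constructors give a fixed injective RELABEL shared by all graphs.\<close>
datatype 'c wlcol = Init 'c | Relabel "'c wlcol" "'c wlcol multiset"

primrec wl :: "'v set \<Rightarrow> 'v set set \<Rightarrow> ('v \<Rightarrow> 'c) \<Rightarrow> nat \<Rightarrow> 'v \<Rightarrow> 'c wlcol" where
  "wl V E c0 0 v = Init (c0 v)"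
| "wl V E c0 (Suc t) v =
     Relabel (wl V E c0 t v) (image_mset (wl V E c0 t) (mset_set (nbrs V E v)))"

definition init_plain :: "'v \<Rightarrow> nat list" where
  "init_plain v = []"

definition init_F :: "'v set \<Rightarrow> 'v set set \<Rightarrow> ('w set \<times> 'w set set) list \<Rightarrow> 'v \<Rightarrow> nat list" where
  "init_F V E Fs v = map (\<lambda>F. ell V E F v) Fs"

definition phi :: "'v set \<Rightarrow> 'v set set \<Rightarrow> ('v \<Rightarrow> 'c) \<Rightarrow> nat \<Rightarrow> nat \<times> 'c wlcol \<Rightarrow> real" where
  "phi V E c0 T p = (if fst p \<le> T then real (card {v \<in> V. wl V E c0 (fst p) v = snd p}) else 0)"

definition phi_supp :: "'v set \<Rightarrow> 'v set set \<Rightarrow> ('v \<Rightarrow> 'c) \<Rightarrow> nat \<Rightarrow> (nat \<times> 'c wlcol) set" where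
  "phi_supp V E c0 T = {(t, wl V E c0 t v) | t v. t \<le> T \<and> v \<in> V}"

definition l2norm :: "'i set \<Rightarrow> ('i \<Rightarrow> real) \<Rightarrow> real" where
  "l2norm S x = sqrt (\<Sum>i\<in>S. (x i)^2)"

text \<open>|| bar(phi^{(T)})(G) - bar(phi^{(T)})(H) ||; the index set is all colours
occurring in G or H (other coordinates are zero in both).\<close>
definition wl_dist ::
  "'v set \<Rightarrow> 'v set set \<Rightarrow> ('v \<Rightarrow> 'c) \<Rightarrow> 'v set \<Rightarrow> 'v set set \<Rightarrow> ('v \<Rightarrow> 'c) \<Rightarrow> nat \<Rightarrow> real" where
  "wl_dist V E c V' E' c' T =
     (let S = phi_supp V E c T \<union> phi_supp V' E' c' T;
          x = phi V E c T; y = phi V' E' c' T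
      in l2norm S (\<lambda>p. x p / l2norm S x - y p / l2norm S y))"

end

theory Submission
  imports Defs
begin

definition adjG :: "nat \<Rightarrow> nat \<Rightarrow> nat \<Rightarrow> bool" where
  "adjG n u v \<longleftrightarrow> u<n \<and> v<n \<and> (v = u+1 \<or> u = v+1 \<or> (u=0 \<and> v=n-1) \<or> (v=0 \<and> u=n-1))"

definition adjH :: "nat \<Rightarrow> nat \<Rightarrow> nat \<Rightarrow> bool" where
  "adjH n u v \<longleftrightarrow> u<n \<and> v<n \<and> ((u<3 \<and> v<3 \<and> u\<noteq>v) \<or>
     (3\<le>u \<and> 3\<le>v \<and> (v=u+1 \<or> u=v+1 \<or> (u=3 \<and> v=n-1) \<or> (v=3 \<and> u=n-1))))"

definition edges_of :: "(nat \<Rightarrow> nat \<Rightarrow> bool) \<Rightarrow> nat set set" where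
  "edges_of R = {{u,v} | u v. R u v}"

lemma edges_mem:
  assumes "\<And>a b. R a b \<Longrightarrow> R b a"
  shows "({a,b} \<in> edges_of R) = R a b"
  using assms unfolding edges_of_def by (auto simp: doubleton_eq_iff)

lemma is_graph_edges:
  assumes "\<And>u v. R u v \<Longrightarrow> u<n \<and> v<n \<and> u\<noteq>v"
  shows "is_graph {..<n} (edges_of R)"
  using assms unfolding is_graph_def edges_of_def by auto

lemma nbrs_edges:
  assumes "\<And>a b. R a b \<Longrightarrow> R b a"
  shows "nbrs V (edges_of R) v = {u\<in>V. R u v}"
  unfolding nbrs_def using edges_mem[of R, OF assms] by auto

lemma adjG_sym: "adjG n a b \<Longrightarrow> adjG n b a" unfolding adjG_def by auto
lemma adjH_sym: "adjH n a b \<Longrightarrow> adjH n b a" unfolding adjH_def by auto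

lemma adjG_ok: "n \<ge> 6 \<Longrightarrow> adjG n u v \<Longrightarrow> u<n \<and> v<n \<and> u\<noteq>v" unfolding adjG_def by auto
lemma adjH_ok: "n \<ge> 6 \<Longrightarrow> adjH n u v \<Longrightarrow> u<n \<and> v<n \<and> u\<noteq>v" unfolding adjH_def by auto

lemma degG:
  assumes "n \<ge> 6" "v < n"
  shows "card {u\<in>{..<n}. adjG n u v} = 2"
proof -
  have "{u\<in>{..<n}. adjG n u v} = {if v+1=n then 0 else v+1, if v=0 then n-1 else v-1}"
    using assms unfolding adjG_def by auto
  moreover have "(if v+1=n then 0 else v+1) \<noteq> (if v=0 then n-1 else v-1)"
    using assms by auto
  ultimately show ?thesis by simp
qed

lemma degH:
  assumes "n \<ge> 6" "v < n"
  shows "card {u\<in>{..<n}. adjH n u v} = 2"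
proof (cases "v < 3")
  case True
  then have "v = 0 \<or> v = 1 \<or> v = 2" by auto
  then show ?thesis
  proof (elim disjE)
    assume v: "v = 0"
    have "{u\<in>{..<n}. adjH n u v} = {1,2}" using assms v unfolding adjH_def by auto
    then show ?thesis by simp
  next
    assume v: "v = 1"
    have "{u\<in>{..<n}. adjH n u v} = {0,2}" using assms v unfolding adjH_def by auto
    then show ?thesis by simp
  next
    assume v: "v = 2"
    have "{u\<in>{..<n}. adjH n u v} = {0,1}" using assms v unfolding adjH_def by auto
    then show ?thesis by simp
  qed
next
  case False
  have "{u\<in>{..<n}. adjH n u v} = {if v+1=n then 3 else v+1, if v=3 then n-1 else v-1}"
    using assms False unfolding adjH_def by auto
  moreover have "(if v+1=n then 3 else v+1) \<noteq> (if v=3 then n-1 else v-1)"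
    using assms False by auto
  ultimately show ?thesis by simp
qed

lemma G_tri_free:
  assumes "n \<ge> 6" "adjG n a b" "adjG n b c" "adjG n a c" "a \<noteq> b" "b \<noteq> c" "a \<noteq> c"
  shows False
  using assms unfolding adjG_def by arith

primrec creg :: "nat \<Rightarrow> nat list wlcol" where
  "creg 0 = Init []"
| "creg (Suc t) = Relabel (creg t) (replicate_mset 2 (creg t))"

lemma wl_regular:
  assumes fin: "finite V" and deg: "\<And>v. v \<in> V \<Longrightarrow> card (nbrs V E v) = 2"
  shows "v \<in> V \<Longrightarrow> wl V E init_plain t v = creg t"
proof (induction t arbitrary: v)
  case 0
  then show ?case by (simp add: init_plain_def)
next
  case (Suc t)
  have sub: "nbrs V E v \<subseteq> V" unfolding nbrs_def by auto
  have "image_mset (wl V E init_plain t) (mset_set (nbrs V E v))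
        = image_mset (\<lambda>_. creg t) (mset_set (nbrs V E v))"
  proof (rule image_mset_cong)
    fix u assume "u \<in># mset_set (nbrs V E v)"
    moreover have "finite (nbrs V E v)" using sub fin finite_subset by blast
    ultimately have "u \<in> V" using sub by auto
    then show "wl V E init_plain t u = creg t" using Suc.IH by blast
  qed
  also have "\<dots> = replicate_mset 2 (creg t)"
    using deg[OF Suc.prems] by (simp add: image_mset_const_eq)
  finally show ?case using Suc by simp
qed

lemma dist_zero:
  assumes fin: "finite V" "V \<noteq> {}"
    and d1: "\<And>v. v \<in> V \<Longrightarrow> card (nbrs V E1 v) = 2"
    and d2: "\<And>v. v \<in> V \<Longrightarrow> card (nbrs V E2 v) = 2"
  shows "wl_dist V E1 init_plain V E2 init_plain T = 0"
proof -
  have p: "phi V E1 init_plain T = phi V E2 init_plain T"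
  proof
    fix p :: "nat \<times> nat list wlcol"
    have "{v \<in> V. wl V E1 init_plain (fst p) v = snd p} = {v \<in> V. wl V E2 init_plain (fst p) v = snd p}"
      using wl_regular[OF fin(1) d1] wl_regular[OF fin(1) d2] by auto
    then show "phi V E1 init_plain T p = phi V E2 init_plain T p" unfolding phi_def by simp
  qed
  have s: "phi_supp V E1 init_plain T = phi_supp V E2 init_plain T"
  proof -
    have h: "phi_supp V E init_plain T = {(t, creg t) | t. t \<le> T}"
      if "\<And>v. v \<in> V \<Longrightarrow> card (nbrs V E v) = 2" for E
    proof -
      have w: "\<And>v t. v \<in> V \<Longrightarrow> wl V E init_plain t v = creg t"
        using wl_regular[OF fin(1) that] by blast
      obtain v0 where v0: "v0 \<in> V" using fin(2) by blast
      show ?thesis unfolding phi_supp_def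
      proof (rule set_eqI, rule iffI)
        fix x assume "x \<in> {(t, wl V E init_plain t v) |t v. t \<le> T \<and> v \<in> V}"
        then show "x \<in> {(t, creg t) |t. t \<le> T}" using w by auto
      next
        fix x assume "x \<in> {(t, creg t) |t. t \<le> T}"
        then obtain t where "x = (t, creg t)" "t \<le> T" by auto
        then show "x \<in> {(t, wl V E init_plain t v) |t v. t \<le> T \<and> v \<in> V}"
          using w[OF \<open>v0 \<in> V\<close>, of t] \<open>v0 \<in> V\<close> by (auto intro!: exI[of _ v0])
      qed
    qed
    show ?thesis using h[of E1, OF d1] h[of E2, OF d2] by simp
  qed
  show ?thesis unfolding wl_dist_def Let_def p s l2norm_def by simp
qed

lemma orth_dist:
  fixes x y :: "'i \<Rightarrow> real"
  assumes fA: "finite A" and fB: "finite B" and dj: "A \<inter> B = {}"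
    and xB: "\<And>p. p \<in> B \<Longrightarrow> x p = 0" and yA: "\<And>p. p \<in> A \<Longrightarrow> y p = 0"
    and pa: "(\<Sum>p\<in>A. (x p)^2) > 0" and pb: "(\<Sum>p\<in>B. (y p)^2) > 0"
  shows "l2norm (A \<union> B) (\<lambda>p. x p / l2norm (A \<union> B) x - y p / l2norm (A \<union> B) y) = sqrt 2"
proof -
  define sa where "sa = (\<Sum>p\<in>A. (x p)^2)"
  define sb where "sb = (\<Sum>p\<in>B. (y p)^2)"
  have nx: "l2norm (A \<union> B) x = sqrt sa"
    unfolding l2norm_def sa_def using sum.union_disjoint[OF fA fB dj, of "\<lambda>p. (x p)^2"] xB by simp
  have ny: "l2norm (A \<union> B) y = sqrt sb"
    unfolding l2norm_def sb_def using sum.union_disjoint[OF fA fB dj, of "\<lambda>p. (y p)^2"] yA by simp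
  have "(\<Sum>p\<in>A \<union> B. (x p / sqrt sa - y p / sqrt sb)^2)
      = (\<Sum>p\<in>A. (x p / sqrt sa - y p / sqrt sb)^2) + (\<Sum>p\<in>B. (x p / sqrt sa - y p / sqrt sb)^2)"
    by (rule sum.union_disjoint[OF fA fB dj])
  also have "(\<Sum>p\<in>A. (x p / sqrt sa - y p / sqrt sb)^2) = (\<Sum>p\<in>A. (x p)^2 / sa)"
    using yA pa unfolding sa_def by (intro sum.cong) (auto simp: power_divide)
  also have "\<dots> = 1" using pa unfolding sa_def by (simp add: sum_divide_distrib[symmetric])
  also have "(\<Sum>p\<in>B. (x p / sqrt sa - y p / sqrt sb)^2) = (\<Sum>p\<in>B. (y p)^2 / sb)"
    using xB pb unfolding sb_def by (intro sum.cong) (auto simp: power_divide)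
  also have "\<dots> = 1" using pb unfolding sb_def by (simp add: sum_divide_distrib[symmetric])
  finally have h: "(\<Sum>p\<in>A \<union> B. (x p / sqrt sa - y p / sqrt sb)^2) = 2" by simp
  show ?thesis unfolding nx ny by (simp add: l2norm_def h)
qed

primrec base :: "'c wlcol \<Rightarrow> 'c" where
  "base (Init c) = c"
| "base (Relabel a m) = base a"

lemma base_wl: "base (wl V E c0 t v) = c0 v"
  by (induction t) auto

lemma phi_supp_finite: "finite V \<Longrightarrow> finite (phi_supp V E c0 T)"
proof -
  assume "finite V"
  have "phi_supp V E c0 T = (\<lambda>(t,v). (t, wl V E c0 t v)) ` ({..T} \<times> V)"
    unfolding phi_supp_def by auto
  then show ?thesis using \<open>finite V\<close> by simp
qed

lemma dist_sqrt2:
  assumes fin: "finite V" and v0: "v0 \<in> V"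
    and c1: "\<And>v. v \<in> V \<Longrightarrow> c1 v = a" and c2: "\<And>v. v \<in> V \<Longrightarrow> c2 v = b" and ab: "a \<noteq> b"
  shows "wl_dist V E1 c1 V E2 c2 T = sqrt 2"
proof -
  let ?A = "phi_supp V E1 c1 T" and ?B = "phi_supp V E2 c2 T"
  have bA: "base (snd p) = a" if "p \<in> ?A" for p using that c1 unfolding phi_supp_def by (auto simp: base_wl)
  have bB: "base (snd p) = b" if "p \<in> ?B" for p using that c2 unfolding phi_supp_def by (auto simp: base_wl)
  have dj: "?A \<inter> ?B = {}" using bA bB ab by blast
  have xB: "phi V E1 c1 T p = 0" if "p \<in> ?B" for p
  proof -
    have "{v \<in> V. wl V E1 c1 (fst p) v = snd p} = {}"
    proof (rule ccontr)
      assume "{v \<in> V. wl V E1 c1 (fst p) v = snd p} \<noteq> {}"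
      then obtain v where v: "v \<in> V" "wl V E1 c1 (fst p) v = snd p" by blast
      have "base (snd p) = c1 v" using base_wl[of V E1 c1 "fst p" v] v(2) by simp
      then show False using bB[OF that] c1[OF v(1)] ab by simp
    qed
    then show ?thesis unfolding phi_def by (simp only: card.empty) simp
  qed
  have yA: "phi V E2 c2 T p = 0" if "p \<in> ?A" for p
  proof -
    have "{v \<in> V. wl V E2 c2 (fst p) v = snd p} = {}"
    proof (rule ccontr)
      assume "{v \<in> V. wl V E2 c2 (fst p) v = snd p} \<noteq> {}"
      then obtain v where v: "v \<in> V" "wl V E2 c2 (fst p) v = snd p" by blast
      have "base (snd p) = c2 v" using base_wl[of V E2 c2 "fst p" v] v(2) by simp
      then show False using bA[OF that] c2[OF v(1)] ab by simp
    qed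
    then show ?thesis unfolding phi_def by (simp only: card.empty) simp
  qed
  have pos: "(\<Sum>p\<in>phi_supp V E c T. (phi V E c T p)^2) > 0" for E and c :: "'a \<Rightarrow> 'b"
  proof -
    let ?p = "(0::nat, wl V E c 0 v0)"
    have mem: "?p \<in> phi_supp V E c T" unfolding phi_supp_def using v0 by blast
    have "v0 \<in> {v \<in> V. wl V E c 0 v = wl V E c 0 v0}" using v0 by simp
    then have "card {v \<in> V. wl V E c 0 v = wl V E c 0 v0} > 0" using fin by (auto simp: card_gt_0_iff)
    then have "(phi V E c T ?p)^2 > 0" unfolding phi_def by simp
    also have "(phi V E c T ?p)^2 \<le> (\<Sum>p\<in>phi_supp V E c T. (phi V E c T p)^2)"
      by (rule member_le_sum[OF mem]) (auto simp: phi_supp_finite[OF fin])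
    finally show ?thesis .
  qed
  show ?thesis unfolding wl_dist_def Let_def
    by (rule orth_dist[OF phi_supp_finite[OF fin] phi_supp_finite[OF fin] dj xB yA pos pos])
qed

lemma not_iso:
  assumes n: "n \<ge> 6"
  shows "\<not> graph_iso {..<n} (edges_of (adjG n)) {..<n} (edges_of (adjH n))"
proof
  assume "graph_iso {..<n} (edges_of (adjG n)) {..<n} (edges_of (adjH n))"
  then obtain f where bij: "bij_betw f {..<n} {..<n}"
    and e: "\<And>u w. u \<in> {..<n} \<Longrightarrow> w \<in> {..<n} \<Longrightarrow>
              ({u, w} \<in> edges_of (adjG n)) = ({f u, f w} \<in> edges_of (adjH n))"
    unfolding graph_iso_def by blast
  have e2: "adjG n u w = adjH n (f u) (f w)" if "u < n" "w < n" for u w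
    using e[of u w] that edges_mem[of "adjG n", OF adjG_sym] edges_mem[of "adjH n", OF adjH_sym] by simp
  have surj: "\<exists>a<n. f a = k" if "k < n" for k
    using bij that unfolding bij_betw_def by (metis imageE lessThan_iff)
  obtain a where a: "a < n" "f a = 0" using surj[of 0] n by auto
  obtain b where b: "b < n" "f b = 1" using surj[of 1] n by auto
  obtain c where c: "c < n" "f c = 2" using surj[of 2] n by auto
  have "adjG n a b" "adjG n b c" "adjG n a c"
    using e2 a b c n by (auto simp: adjH_def)
  moreover have "a \<noteq> b" "b \<noteq> c" "a \<noteq> c" using a b c by auto
  ultimately show False using G_tri_free[OF n] by blast
qed

lemma ell_self:
  assumes "is_graph V E" "v \<in> V"
  shows "ell V E (V, E) v = 1"
proof -
  have "induced_edges E V = E" using assms(1) unfolding induced_edges_def is_graph_def by auto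
  moreover have "graph_iso V E V E" unfolding graph_iso_def by (rule exI[of _ id]) auto
  ultimately show ?thesis using assms(2) unfolding ell_def by auto
qed

lemma ell_other:
  assumes "is_graph V E" "finite V" "\<not> graph_iso V E V E'"
  shows "ell V E (V, E') v = 0"
proof -
  have "\<not> (X \<subseteq> V \<and> v \<in> X \<and> graph_iso X (induced_edges E X) V E')" for X
  proof
    assume h: "X \<subseteq> V \<and> v \<in> X \<and> graph_iso X (induced_edges E X) V E'"
    then obtain f where "bij_betw f X V" unfolding graph_iso_def by blast
    then have "card X = card V" by (rule bij_betw_same_card)
    then have "X = V" using h assms(2) card_subset_eq by blast
    moreover have "induced_edges E V = E" using assms(1) unfolding induced_edges_def is_graph_def by auto
    ultimately show False using h assms(3) by simp
  qed
  then show ?thesis unfolding ell_def by auto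
qed

theorem proposition10:
  fixes n :: nat
  assumes "n \<ge> 6"
  shows "\<exists>(EG :: nat set set) (EH :: nat set set) (VF :: nat set) (EF :: nat set set).
           is_graph {..<n} EG \<and> is_graph {..<n} EH \<and> is_graph VF EF \<and>
           \<not> graph_iso {..<n} EG {..<n} EH \<and>
           (\<forall>T. wl_dist {..<n} EG init_plain {..<n} EH init_plain T = 0 \<and>
                wl_dist {..<n} EG (init_F {..<n} EG [(VF, EF)])
                        {..<n} EH (init_F {..<n} EH [(VF, EF)]) T = sqrt 2)"
proof -
  let ?EG = "edges_of (adjG n)" and ?EH = "edges_of (adjH n)" and ?V = "{..<n}"
  have gG: "is_graph ?V ?EG" by (rule is_graph_edges) (use adjG_ok[OF assms] in blast)
  have gH: "is_graph ?V ?EH" by (rule is_graph_edges) (use adjH_ok[OF assms] in blast)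
  have ni: "\<not> graph_iso ?V ?EG ?V ?EH" by (rule not_iso[OF assms])
  have dG: "card (nbrs ?V ?EG v) = 2" if "v \<in> ?V" for v
  proof -
    have "nbrs ?V ?EG v = {u\<in>?V. adjG n u v}" by (rule nbrs_edges) (rule adjG_sym)
    also have "card \<dots> = 2" using degG[OF assms] that by blast
    finally show ?thesis .
  qed
  have dH: "card (nbrs ?V ?EH v) = 2" if "v \<in> ?V" for v
  proof -
    have "nbrs ?V ?EH v = {u\<in>?V. adjH n u v}" by (rule nbrs_edges) (rule adjH_sym)
    also have "card \<dots> = 2" using degH[OF assms] that by blast
    finally show ?thesis .
  qed
  have ne: "(0::nat) \<in> ?V" using assms by simp
  have cG: "init_F ?V ?EG [(?V, ?EH)] v = [0]" if "v \<in> ?V" for v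
    unfolding init_F_def using ell_other[OF gG _ ni] by simp
  have cH: "init_F ?V ?EH [(?V, ?EH)] v = [1]" if "v \<in> ?V" for v
    unfolding init_F_def using ell_self[OF gH that] by simp
  have "\<forall>T. wl_dist ?V ?EG init_plain ?V ?EH init_plain T = 0 \<and>
           wl_dist ?V ?EG (init_F ?V ?EG [(?V, ?EH)]) ?V ?EH (init_F ?V ?EH [(?V, ?EH)]) T = sqrt 2"
  proof
    fix T
    show "wl_dist ?V ?EG init_plain ?V ?EH init_plain T = 0 \<and>
           wl_dist ?V ?EG (init_F ?V ?EG [(?V, ?EH)]) ?V ?EH (init_F ?V ?EH [(?V, ?EH)]) T = sqrt 2"
      using dist_zero[of ?V ?EG ?EH T] dG dH ne
        dist_sqrt2[of ?V 0 "init_F ?V ?EG [(?V, ?EH)]" "[0]" "init_F ?V ?EH [(?V, ?EH)]" "[1]" ?EG ?EH T]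
        cG cH by auto
  qed
  then show ?thesis using gG gH ni by blast
qed

end
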